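(* Let $A$ be a finite set, $\bot,\dagger\notin A$ distinct extra symbols, $N\geq1$, and let $\mathsf L$, $\pi$ and $\zeta_t$ ($t>0$) be as in the context. Let $\mu_{\mathsf L}$ denote the Möbius function of the finite poset $\mathsf L$ (the inverse of the matrix $\zeta_{\mathsf L}(x,y)=1$ if $x\leq y$ and $0$ otherwise). Then for all $x,y\in\mathsf L$, $$\zeta_t^{-1}(x,y)=\pi(y|x)^t\,\mu_{\mathsf L}(x,y).$$
   Context: $A^*$ is the set of finite strings over $A$, $|x|$ denotes length (with $\bot,\dagger$ counted). $\mathsf L=\{\bot a : a\in A^*,\ |a|\leq N-1\}\sqcup\{\bot a\dagger : a\in A^*,\ |a|<N-1\}$, partially ordered by the prefix relation ($x\leq y$ iff $y=xa'$ for some string $a'$). Strings $\bot a$ are unfinished texts. For each unfinished text $x\in\mathsf L$ with $|x|\leq N-1$ a probability mass function $p(-|x)$ on $A\cup\{\dagger\}$ is given. Define $\pi(y|x)=1$ if $x=y$; $0$ if $x\not\leq y$; and if $x=\bot a_1\cdots a_t$ is a proper prefix of $y=xa_{t+1}\cdots a_{t+k}$, $\pi(y|x)=\prod_{i=1}^k p(a_{t+i}\mid\bot a_1\cdots a_{t+i-1})$. For $t>0$, $\zeta_t$ is the $\mathsf L\times\mathsf L$ matrix $\zeta_t(x,y)=\pi(y|x)^t$ (which is invertible). *)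

theory Defs
  imports Complex_Main "HOL-Library.Sublist"
begin

datatype 'a sym = Bot | Dag | Sym 'a

text \<open>The poset L of texts (strings including Bot and Dag), ordered by prefix.\<close>
definition texts :: "'a set \<Rightarrow> nat \<Rightarrow> 'a sym list set" where
  "texts A N =
     {Bot # map Sym a | a. set a \<subseteq> A \<and> length a \<le> N - 1}
   \<union> {Bot # map Sym a @ [Dag] | a. set a \<subseteq> A \<and> length a < N - 1}"

definition unfinished :: "'a set \<Rightarrow> nat \<Rightarrow> 'a sym list set" where
  "unfinished A N = {Bot # map Sym a | a. set a \<subseteq> A \<and> length a \<le> N - 1}"

definition pi_cond :: "('a sym list \<Rightarrow> 'a sym \<Rightarrow> real) \<Rightarrow> 'a sym list \<Rightarrow> 'a sym list \<Rightarrow> real" where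
  "pi_cond p y x =
     (if prefix x y then (\<Prod>i\<in>{length x..<length y}. p (take i y) (y ! i)) else 0)"

definition zeta_t :: "('a sym list \<Rightarrow> 'a sym \<Rightarrow> real) \<Rightarrow> real \<Rightarrow> 'a sym list \<Rightarrow> 'a sym list \<Rightarrow> real" where
  "zeta_t p t x y = pi_cond p y x powr t"

definition zeta_prefix :: "'a sym list \<Rightarrow> 'a sym list \<Rightarrow> real" where
  "zeta_prefix x y = (if prefix x y then 1 else 0)"

definition is_inverse_on :: "'b set \<Rightarrow> ('b \<Rightarrow> 'b \<Rightarrow> real) \<Rightarrow> ('b \<Rightarrow> 'b \<Rightarrow> real) \<Rightarrow> bool" where
  "is_inverse_on S M M' \<longleftrightarrow>
     (\<forall>x\<in>S. \<forall>y\<in>S. (\<Sum>z\<in>S. M x z * M' z y) = (if x = y then 1 else 0)) \<and>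
     (\<forall>x\<in>S. \<forall>y\<in>S. (\<Sum>z\<in>S. M' x z * M z y) = (if x = y then 1 else 0))"

definition matinv :: "'b set \<Rightarrow> ('b \<Rightarrow> 'b \<Rightarrow> real) \<Rightarrow> ('b \<Rightarrow> 'b \<Rightarrow> real)" where
  "matinv S M = (THE M'. is_inverse_on S M M' \<and> (\<forall>x y. (x \<notin> S \<or> y \<notin> S) \<longrightarrow> M' x y = 0))"

definition mobius_L :: "'a set \<Rightarrow> nat \<Rightarrow> 'a sym list \<Rightarrow> 'a sym list \<Rightarrow> real" where
  "mobius_L A N = matinv (texts A N) zeta_prefix"

end

theory Submission
  imports Defs
begin




lemma matinv_eq:
  assumes fin: "finite S" and inv: "is_inverse_on S M M'"
    and z: "\<forall>x y. (x \<notin> S \<or> y \<notin> S) \<longrightarrow> M' x y = 0"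
  shows "matinv S M = M'"
  unfolding matinv_def
proof (rule the_equality)
  show "is_inverse_on S M M' \<and> (\<forall>x y. x \<notin> S \<or> y \<notin> S \<longrightarrow> M' x y = 0)" using inv z by blast
next
  fix M'' assume h: "is_inverse_on S M M'' \<and> (\<forall>x y. x \<notin> S \<or> y \<notin> S \<longrightarrow> M'' x y = 0)"
  show "M'' = M'"
  proof (intro ext)
    fix x y
    show "M'' x y = M' x y"
    proof (cases "x \<in> S \<and> y \<in> S")
      case False then show ?thesis using h z by auto
    next
      case True
      have "M'' x y = (\<Sum>z\<in>S. M'' x z * (if z = y then 1 else 0))"
        using True fin by (simp add: if_distrib cong: if_cong)
      also have "\<dots> = (\<Sum>z\<in>S. M'' x z * (\<Sum>w\<in>S. M z w * M' w y))"
        using inv True unfolding is_inverse_on_def by (intro sum.cong) auto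
      also have "\<dots> = (\<Sum>w\<in>S. (\<Sum>z\<in>S. M'' x z * M z w) * M' w y)"
        unfolding sum_distrib_left sum_distrib_right mult.assoc
        by (rule sum.swap)
      also have "\<dots> = (\<Sum>w\<in>S. (if x = w then 1 else 0) * M' w y)"
        using h True unfolding is_inverse_on_def by (intro sum.cong) auto
      also have "\<dots> = (\<Sum>w\<in>S. if x = w then M' w y else 0)" by (intro sum.cong) auto
      also have "\<dots> = M' x y" using True fin by simp
      finally show ?thesis .
    qed
  qed
qed



definition Wm :: "'b list set \<Rightarrow> ('b list \<Rightarrow> 'b list \<Rightarrow> real) \<Rightarrow> 'b list \<Rightarrow> 'b list \<Rightarrow> real" where
  "Wm S f x y = (if x \<in> S \<and> y \<in> S then
      (if x = y then 1 else if prefix x y \<and> length y = Suc (length x) then - f x y else 0) else 0)"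


lemma imm_butlast: "prefix z y \<Longrightarrow> length y = Suc (length z) \<Longrightarrow> z = butlast y"
proof -
  assume "prefix z y" "length y = Suc (length z)"
  then obtain zs where "y = z @ zs" "length zs = 1" by (auto simp: prefix_def)
  then show ?thesis by (cases zs) (auto simp: butlast_append)
qed
lemma imm_take: "prefix x z \<Longrightarrow> length z = Suc (length x) \<Longrightarrow> prefix z y \<Longrightarrow> z = take (Suc (length x)) y"
  by (metis append_eq_conv_conj prefix_def)
lemma l1: "y \<noteq> butlast y \<Longrightarrow> \<not> prefix y (butlast y)"
  using prefix_length_le[of y "butlast y"] by (cases y) auto
lemma l2: "prefix x y \<Longrightarrow> x \<noteq> y \<Longrightarrow> prefix x (butlast y)"
  by (auto simp: prefix_def butlast_append)
lemma l3: "y \<noteq> butlast y \<Longrightarrow> prefix (butlast y) y \<and> length y = Suc (length (butlast y))"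
  by (cases y) (auto simp: prefixeq_butlast)
lemma l4: "\<not> prefix x y \<Longrightarrow> \<not> prefix x (butlast y)"
  by (metis prefixeq_butlast prefix_order.dual_order.trans)
lemma l5: "\<not> prefix x y \<Longrightarrow> \<not> prefix x (take n y)"
  by (metis prefix_order.dual_order.trans take_is_prefix)
lemma l6: "prefix x y \<Longrightarrow> length x < length y \<Longrightarrow> prefix x (take (Suc (length x)) y)"
  by (auto simp: prefix_def)
lemma l7: "prefix x y \<Longrightarrow> x \<noteq> y \<Longrightarrow> length x < length y"
  by (metis le_neq_implies_less prefix_length_le prefix_length_prefix prefix_order.eq_iff prefix_order.refl)

lemma gen_inverse:
  assumes fin: "finite S"
    and conv: "\<And>x y z. x \<in> S \<Longrightarrow> y \<in> S \<Longrightarrow> prefix x z \<Longrightarrow> prefix z y \<Longrightarrow> z \<in> S"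
    and f0: "\<And>x y. \<not> prefix x y \<Longrightarrow> f x y = 0"
    and f1: "\<And>x. f x x = 1"
    and fm: "\<And>x y z. x \<in> S \<Longrightarrow> y \<in> S \<Longrightarrow> z \<in> S \<Longrightarrow> prefix x y \<Longrightarrow> prefix y z \<Longrightarrow> f x z = f x y * f y z"
  shows "is_inverse_on S f (Wm S f)"
  unfolding is_inverse_on_def
proof (intro conjI ballI)
  fix x y assume x: "x \<in> S" and y: "y \<in> S"
  define b where "b = butlast y"
  have "(\<Sum>z\<in>S. f x z * Wm S f z y) = (\<Sum>z\<in>S \<inter> {y, b}. f x z * Wm S f z y)"
  proof (rule sum.mono_neutral_cong_right)
    show "\<forall>z\<in>S - S \<inter> {y, b}. f x z * Wm S f z y = 0"
      using imm_butlast b_def unfolding Wm_def by auto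
  qed (use fin in auto)
  also have "\<dots> = (if x = y then 1 else 0)"
  proof (cases "y = b")
    case True
    then have "\<not> prefix b y \<or> length y \<noteq> Suc (length b)" by simp
    moreover have "y = []" using True b_def by (cases y rule: rev_cases) auto
    ultimately show ?thesis using True y f1 f0[of x y] unfolding Wm_def by auto
  next
    case False
    then have yb: "y \<noteq> b" .
    show ?thesis
    proof (cases "prefix x y")
      case True
      show ?thesis
      proof (cases "x = y")
        case True
        have "\<not> prefix x b" using True b_def False l1 by simp
        then show ?thesis using True y yb f1 f0 unfolding Wm_def by auto
      next
        case xy: False
        have "prefix x b" using True xy b_def l2 by simp
        moreover have "prefix b y" "length y = Suc (length b)" using b_def yb l3 by auto
        moreover have "b \<in> S" using conv[OF x y \<open>prefix x b\<close> \<open>prefix b y\<close>] .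
        ultimately show ?thesis using y yb xy fm[OF x \<open>b \<in> S\<close> y] unfolding Wm_def by auto
      qed
    next
      case False
      have "\<not> prefix x b" using False b_def l4 by simp
      moreover have "x \<noteq> y" using False by auto
      ultimately show ?thesis using False f0[of x y] f0[of x b] by (subst sum.neutral) auto
    qed
  qed
  finally show "(\<Sum>z\<in>S. f x z * Wm S f z y) = (if x = y then 1 else 0)" .
next
  fix x y assume x: "x \<in> S" and y: "y \<in> S"
  define c where "c = take (Suc (length x)) y"
  have "(\<Sum>z\<in>S. Wm S f x z * f z y) = (\<Sum>z\<in>S \<inter> {x, c}. Wm S f x z * f z y)"
  proof (rule sum.mono_neutral_cong_right)
    show "\<forall>z\<in>S - S \<inter> {x, c}. Wm S f x z * f z y = 0"
    proof
      fix z assume z: "z \<in> S - S \<inter> {x, c}"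
      show "Wm S f x z * f z y = 0"
      proof (cases "prefix z y")
        case True
        then show ?thesis using z imm_take[of x z y] c_def unfolding Wm_def by auto
      qed (simp add: f0)
    qed
  qed (use fin in auto)
  also have "\<dots> = (if x = y then 1 else 0)"
  proof (cases "prefix x y")
    case False
    have "\<not> prefix x c" using False c_def l5 by simp
    have "x \<noteq> y" using False by auto
    then show ?thesis using False \<open>\<not> prefix x c\<close> f0[of x y] unfolding Wm_def
      by (subst sum.neutral) auto
  next
    case True
    show ?thesis
    proof (cases "x = y")
      case True
      then have "c = x" using c_def by simp
      then show ?thesis using True x f1 unfolding Wm_def by auto
    next
      case xy: False
      have lt: "length x < length y" using l7[OF True xy] .
      have pxc: "prefix x c" using l6[OF True lt] c_def by simp
      have pcy: "prefix c y" using c_def by (simp add: take_is_prefix)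
      have lc: "length c = Suc (length x)" using c_def lt by simp
      have cS: "c \<in> S" using conv[OF x y pxc pcy] .
      have "c \<noteq> x" using lc by auto
      then show ?thesis using x cS xy pxc lc fm[OF x cS y pxc pcy] unfolding Wm_def by auto
    qed
  qed
  finally show "(\<Sum>z\<in>S. Wm S f x z * f z y) = (if x = y then 1 else 0)" .
qed



lemma texts_nonempty: "x \<in> texts A N \<Longrightarrow> x \<noteq> []"
  unfolding texts_def by auto

lemma texts_finite: "finite A \<Longrightarrow> finite (texts A N)"
proof -
  assume fA: "finite A"
  have f: "finite {a. set a \<subseteq> A \<and> length a \<le> N - 1}"
    using finite_lists_length_le[OF fA] by simp
  have "texts A N \<subseteq> (\<lambda>a. Bot # map Sym a) ` {a. set a \<subseteq> A \<and> length a \<le> N - 1}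
      \<union> (\<lambda>a. Bot # map Sym a @ [Dag]) ` {a. set a \<subseteq> A \<and> length a \<le> N - 1}"
    unfolding texts_def by auto
  then show ?thesis using f by (meson finite_UnI finite_imageI finite_subset)
qed

lemma texts_pre_map:
  assumes "set a \<subseteq> A" "length a \<le> N - 1" "prefix zs (map Sym a)"
  shows "Bot # zs \<in> texts A N"
proof -
  obtain b where b: "prefix b a" "zs = map Sym b" using prefix_map_rightE[OF assms(3)] by blast
  have "set b \<subseteq> A" using b(1) assms(1) set_mono_prefix by blast
  moreover have "length b \<le> N - 1" using prefix_length_le[OF b(1)] assms(2) by simp
  ultimately show ?thesis unfolding texts_def using b(2) by blast
qed

lemma texts_conv:
  assumes x: "x \<in> texts A N" and y: "y \<in> texts A N" and xz: "prefix x z" and zy: "prefix z y"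
  shows "z \<in> texts A N"
proof -
  have "z \<noteq> []" using texts_nonempty[OF x] xz by auto
  from y consider (u) a where "y = Bot # map Sym a" "set a \<subseteq> A" "length a \<le> N - 1"
    | (d) a where "y = Bot # map Sym a @ [Dag]" "set a \<subseteq> A" "length a < N - 1"
    unfolding texts_def by blast
  then show ?thesis
  proof cases
    case u
    then obtain zs where "z = Bot # zs" "prefix zs (map Sym a)"
      using zy \<open>z \<noteq> []\<close> by (auto simp: prefix_Cons)
    then show ?thesis using texts_pre_map u by blast
  next
    case d
    then obtain zs where zs: "z = Bot # zs" "prefix zs (map Sym a @ [Dag])"
      using zy \<open>z \<noteq> []\<close> by (auto simp: prefix_Cons)
    then have "zs = map Sym a @ [Dag] \<or> prefix zs (map Sym a)" by simp
    then show ?thesis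
    proof
      assume "zs = map Sym a @ [Dag]" then show ?thesis using zs d y by simp
    next
      assume "prefix zs (map Sym a)" then show ?thesis using texts_pre_map[of a A N zs] zs d by simp
    qed
  qed
qed

lemma pi_refl: "pi_cond p x x = 1"
  unfolding pi_cond_def by simp

lemma pi_mult:
  assumes "prefix x y" "prefix y z"
  shows "pi_cond p z x = pi_cond p y x * pi_cond p z y"
proof -
  have xz: "prefix x z" using assms prefix_order.trans by blast
  have l1: "length x \<le> length y" "length y \<le> length z" using assms prefix_length_le by auto
  obtain r where r: "z = y @ r" using assms(2) prefix_def by blast
  have "(\<Prod>i\<in>{length x..<length y}. p (take i z) (z ! i)) = (\<Prod>i\<in>{length x..<length y}. p (take i y) (y ! i))"
    using r by (intro prod.cong) (auto simp: nth_append)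
  then show ?thesis unfolding pi_cond_def using assms xz l1
    by (simp add: prod.atLeastLessThan_concat[symmetric, of "length x" "length y" "length z"])
qed

theorem corollary3p7:
  fixes A :: "'a set" and N :: nat and t :: real
    and p :: "'a sym list \<Rightarrow> 'a sym \<Rightarrow> real"
  assumes "finite A" and "N \<ge> 1" and "t > 0"
    and p_nonneg: "\<And>x b. x \<in> unfinished A N \<Longrightarrow> length x \<le> N - 1 \<Longrightarrow>
                     b \<in> Sym ` A \<union> {Dag} \<Longrightarrow> p x b \<ge> 0"
    and p_sum: "\<And>x. x \<in> unfinished A N \<Longrightarrow> length x \<le> N - 1 \<Longrightarrow>
                     (\<Sum>b\<in>Sym ` A \<union> {Dag}. p x b) = 1"
    and "x \<in> texts A N" and "y \<in> texts A N"
  shows "matinv (texts A N) (zeta_t p t) x y = pi_cond p y x powr t * mobius_L A N x y"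
proof -
  let ?S = "texts A N"
  have fin: "finite ?S" using texts_finite[OF assms(1)] .
  have conv: "\<And>x y z. x \<in> ?S \<Longrightarrow> y \<in> ?S \<Longrightarrow> prefix x z \<Longrightarrow> prefix z y \<Longrightarrow> z \<in> ?S"
    using texts_conv by blast
  have i1: "is_inverse_on ?S zeta_prefix (Wm ?S zeta_prefix)"
    by (rule gen_inverse[OF fin conv]) (auto simp: zeta_prefix_def intro: prefix_order.trans)
  have i2: "is_inverse_on ?S (zeta_t p t) (Wm ?S (zeta_t p t))"
  proof (rule gen_inverse[OF fin conv])
    show "\<And>x y. \<not> prefix x y \<Longrightarrow> zeta_t p t x y = 0"
      by (simp add: zeta_t_def pi_cond_def)
    show "\<And>x. zeta_t p t x x = 1" by (simp add: zeta_t_def pi_refl)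
    fix x y z assume "x \<in> ?S" "y \<in> ?S" "z \<in> ?S" and xy: "prefix x y" and yz: "prefix y z"
    show "zeta_t p t x z = zeta_t p t x y * zeta_t p t y z"
      unfolding zeta_t_def pi_mult[OF xy yz] by (rule powr_mult)
  qed
  have m1: "mobius_L A N = Wm ?S zeta_prefix"
    unfolding mobius_L_def by (rule matinv_eq[OF fin i1]) (auto simp: Wm_def)
  have m2: "matinv ?S (zeta_t p t) = Wm ?S (zeta_t p t)"
    by (rule matinv_eq[OF fin i2]) (auto simp: Wm_def)
  show ?thesis
  proof (cases "x = y")
    case True
    then show ?thesis using assms(6,7) unfolding m1 m2 Wm_def zeta_t_def zeta_prefix_def by (simp add: pi_refl)
  next
    case False
    then show ?thesis using assms(6,7) unfolding m1 m2 Wm_def zeta_t_def zeta_prefix_def by simp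
  qed
qed

end
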